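(* Let $G$ be a Polish group and let $\varphi,\psi\colon G \to [0,\infty]$ be arbitrary functions. Then for every $g \in G$, \[ (\varphi \diamond \psi)(g) \leq (U(\varphi) \diamond U(\psi))(g). \]
   Context: For functions $\varphi,\psi\colon G \to [0,\infty]$, define $(\varphi \diamond \psi)(x) = \inf_{h \in G} \bigl(\varphi(h) + \psi(h^{-1}x)\bigr)$. For $\varphi\colon G\to[0,\infty]$, $U(\varphi)$ denotes the pointwise infimum of all upper semi-continuous functions $\psi\colon G \to [0,\infty]$ such that the set $\{x \colon \varphi(x) > \psi(x)\}$ is meagre in $G$. *)

theory Defs
  imports "HOL-Analysis.Analysis" "HOL-Library.Extended_Nonnegative_Real"
begin

definition nowhere_dense :: "'a::topological_space set \<Rightarrow> bool" where
  "nowhere_dense A \<longleftrightarrow> interior (closure A) = {}"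

definition meagre :: "'a::topological_space set \<Rightarrow> bool" where
  "meagre A \<longleftrightarrow> (\<exists>F. countable F \<and> (\<forall>N\<in>F. nowhere_dense N) \<and> A \<subseteq> \<Union>F)"

definition usc :: "('a::topological_space \<Rightarrow> ennreal) \<Rightarrow> bool" where
  "usc f \<longleftrightarrow> (\<forall>c. open {x. f x < c})"

text \<open>Inf-convolution on a group written additively: h^{-1} x is - h + x.\<close>
definition diamond :: "('a::group_add \<Rightarrow> ennreal) \<Rightarrow> ('a \<Rightarrow> ennreal) \<Rightarrow> 'a \<Rightarrow> ennreal"
  (infixl "\<diamond>" 70) where
  "(\<phi> \<diamond> \<psi>) x = (INF h. \<phi> h + \<psi> (- h + x))"

definition U :: "('a::topological_space \<Rightarrow> ennreal) \<Rightarrow> 'a \<Rightarrow> ennreal" where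
  "U \<phi> x = (INF \<psi> \<in> {\<psi>. usc \<psi> \<and> meagre {y. \<phi> y > \<psi> y}}. \<psi> x)"

end

theory Submission
  imports Defs
begin

lemma nowhere_dense_preimage:
  fixes f :: "'a::topological_space \<Rightarrow> 'b::topological_space"
  assumes cf: "continuous_on UNIV f" and cf': "continuous_on UNIV f'"
    and inv1: "\<And>x. f' (f x) = x" and inv2: "\<And>y. f (f' y) = y"
    and N: "nowhere_dense N"
  shows "nowhere_dense (f -` N)"
proof (rule ccontr)
  assume "\<not> nowhere_dense (f -` N)"
  then obtain x where x: "x \<in> interior (closure (f -` N))"
    unfolding nowhere_dense_def by auto
  define Op where "Op = interior (closure (f -` N))"
  have "open Op" "x \<in> Op" using x Op_def by auto
  have "closed (f -` closure N)"
    using cf by (simp add: continuous_on_closed_vimage)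
  hence "closure (f -` N) \<subseteq> f -` closure N"
    by (meson closure_minimal closure_subset vimage_mono)
  hence sub: "Op \<subseteq> f -` closure N" using Op_def interior_subset by blast
  have "open (f' -` Op)"
    using cf' \<open>open Op\<close> by (simp add: continuous_on_open_vimage)
  moreover have "f x \<in> f' -` Op" using inv1 \<open>x \<in> Op\<close> by simp
  moreover have "f' -` Op \<subseteq> closure N"
    using sub inv2 by auto
  ultimately have "f x \<in> interior (closure N)"
    using interior_maximal by blast
  with N show False unfolding nowhere_dense_def by auto
qed

lemma meagre_preimage:
  fixes f :: "'a::topological_space \<Rightarrow> 'b::topological_space"
  assumes cf: "continuous_on UNIV f" and cf': "continuous_on UNIV f'"
    and inv1: "\<And>x. f' (f x) = x" and inv2: "\<And>y. f (f' y) = y"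
    and M: "meagre M"
  shows "meagre (f -` M)"
proof -
  obtain F where F: "countable F" "\<forall>N\<in>F. nowhere_dense N" "M \<subseteq> \<Union>F"
    using M unfolding meagre_def by auto
  show ?thesis unfolding meagre_def
  proof (intro exI conjI)
    show "countable ((\<lambda>N. f -` N) ` F)" using F by simp
    show "\<forall>N\<in>(\<lambda>N. f -` N) ` F. nowhere_dense N"
      using F nowhere_dense_preimage[OF cf cf' inv1 inv2] by auto
    show "f -` M \<subseteq> \<Union>((\<lambda>N. f -` N) ` F)" using F(3) by auto
  qed
qed

lemma meagre_Un: "meagre A \<Longrightarrow> meagre B \<Longrightarrow> meagre (A \<union> B)"
  unfolding meagre_def
  apply clarify
  subgoal for F1 F2 by (rule exI[of _ "F1 \<union> F2"]) auto
  done

lemma open_not_meagre: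
  fixes Op :: "'a::polish_space set"
  assumes "open Op" "Op \<noteq> {}" "meagre M"
  shows "\<exists>x\<in>Op. x \<notin> M"
proof (rule ccontr)
  assume "\<not> ?thesis"
  hence OM: "Op \<subseteq> M" by auto
  obtain F where F: "countable F" "\<forall>N\<in>F. nowhere_dense N" "M \<subseteq> \<Union>F"
    using assms(3) unfolding meagre_def by auto
  have cm: "completely_metrizable_space (euclidean:: 'a topology)"
    by (simp add: completely_metrizable_space_euclidean)
  have "euclidean interior_of \<Union>(closure ` F) = {}"
    apply (rule Baire_category_alt)
    using cm F unfolding nowhere_dense_def by auto
  hence "interior (\<Union>(closure ` F)) = {}" by simp
  moreover have "Op \<subseteq> \<Union>(closure ` F)" using OM F closure_subset by blast
  hence "Op \<subseteq> interior (\<Union>(closure ` F))" using assms(1) by (simp add: interior_maximal)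
  ultimately show False using assms(2) by auto
qed

theorem proposition3p4:
  fixes \<phi> \<psi> :: "'a::{topological_group_add, polish_space} \<Rightarrow> ennreal"
    and g :: 'a
  shows "(\<phi> \<diamond> \<psi>) g \<le> (U \<phi> \<diamond> U \<psi>) g"
proof -
  have key: "(\<phi> \<diamond> \<psi>) g \<le> a + b" if a: "U \<phi> h < a" and b: "U \<psi> (- h + g) < b" for h a b
  proof -
    obtain \<psi>1 where p1: "usc \<psi>1" "meagre {y. \<phi> y > \<psi>1 y}" "\<psi>1 h < a"
      using a unfolding U_def by (auto simp: INF_less_iff)
    obtain \<psi>2 where p2: "usc \<psi>2" "meagre {y. \<psi> y > \<psi>2 y}" "\<psi>2 (- h + g) < b"
      using b unfolding U_def by (auto simp: INF_less_iff)
    define f where "f = (\<lambda>x::'a. - x + g)"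
    define f' where "f' = (\<lambda>y::'a. g + - y)"
    have cf: "continuous_on UNIV f" unfolding f_def by (intro continuous_intros)
    have cf': "continuous_on UNIV f'" unfolding f'_def by (intro continuous_intros)
    have i1: "f' (f x) = x" for x unfolding f_def f'_def by (simp add: minus_add add.assoc)
    have i2: "f (f' y) = y" for y unfolding f_def f'_def by (simp add: minus_add add.assoc)
    define Op where "Op = {x. \<psi>1 x < a} \<inter> f -` {x. \<psi>2 x < b}"
    have "open Op" unfolding Op_def
      using p1(1) p2(1) cf unfolding usc_def
      by (intro open_Int) (auto simp: continuous_on_open_vimage)
    moreover have "h \<in> Op" unfolding Op_def f_def using p1 p2 by auto
    moreover have "meagre ({y. \<phi> y > \<psi>1 y} \<union> f -` {y. \<psi> y > \<psi>2 y})"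
      using meagre_Un p1(2) meagre_preimage[OF cf cf' i1 i2 p2(2)] by blast
    ultimately obtain x where x: "x \<in> Op" "x \<notin> {y. \<phi> y > \<psi>1 y} \<union> f -` {y. \<psi> y > \<psi>2 y}"
      using open_not_meagre by blast
    have "(\<phi> \<diamond> \<psi>) g \<le> \<phi> x + \<psi> (- x + g)"
      unfolding diamond_def by (rule INF_lower) simp
    also have "\<dots> \<le> a + b"
    proof (rule add_mono)
      show "\<phi> x \<le> a" using x unfolding Op_def by (auto simp: not_less)
      show "\<psi> (- x + g) \<le> b" using x unfolding Op_def f_def by (auto simp: not_less)
    qed
    finally show ?thesis .
  qed
  have "(\<phi> \<diamond> \<psi>) g \<le> U \<phi> h + U \<psi> (- h + g)" for h
  proof (rule ennreal_le_epsilon)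
    fix e :: real
    assume lt: "U \<phi> h + U \<psi> (- h + g) < top" and e: "0 < e"
    have t1: "U \<phi> h \<noteq> top" and t2: "U \<psi> (- h + g) \<noteq> top" using lt by auto
    have "U \<phi> h < U \<phi> h + ennreal (e/2)"
      using t1 e ennreal_add_left_cancel_less[of "U \<phi> h" 0 "ennreal (e/2)"] by simp
    moreover have "U \<psi> (- h + g) < U \<psi> (- h + g) + ennreal (e/2)"
      using t2 e ennreal_add_left_cancel_less[of "U \<psi> (- h + g)" 0 "ennreal (e/2)"] by simp
    ultimately have "(\<phi> \<diamond> \<psi>) g \<le> (U \<phi> h + ennreal (e/2)) + (U \<psi> (- h + g) + ennreal (e/2))"
      by (rule key)
    also have "\<dots> = U \<phi> h + U \<psi> (- h + g) + (ennreal (e/2) + ennreal (e/2))"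
      by (simp add: ac_simps)
    also have "ennreal (e/2) + ennreal (e/2) = ennreal e"
      using e by (simp flip: ennreal_plus)
    finally show "(\<phi> \<diamond> \<psi>) g \<le> U \<phi> h + U \<psi> (- h + g) + ennreal e" .
  qed
  thus ?thesis unfolding diamond_def[of "U \<phi>"] by (rule INF_greatest)
qed

end
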